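(* Let $\mathcal{P}$ be a poset with at least two elements having the Unique Cover Twin Property, let $n\ge 3$, and let $\mathcal{F}$ be an induced-$\mathcal{P}$-saturated family in $\mathcal{B}_n$. If there exist distinct $x,y\in[n]$ such that no $F\in\mathcal{F}$ satisfies $|F\cap\{x,y\}|=1$, then $F\cap\{x,y\}=\emptyset$ for all $F\in\mathcal{F}$.
   Context: In a poset $(P,\le)$, $y$ covers $x$ if $x<y$ and there is no $z$ with $x<z<y$. A poset $\mathcal{P}=(P,\le)$ has the Unique Cover Twin Property (UCTP) if for every $S\in P$ that has exactly one cover $T\in P$, there exists $S'\in P$ with $S'\ne S$ such that $T$ also covers $S'$. $\mathcal{B}_n$ denotes the Boolean lattice $(2^{[n]},\subseteq)$. A family $\mathcal{F}\subseteq 2^{[n]}$ (ordered by inclusion) is induced-$\mathcal{P}$-saturated if it contains no induced copy of $\mathcal{P}$ (an injection $f$ with $u\le v\iff f(u)\subseteq f(v)$) but every family $\mathcal{F}'$ with $\mathcal{F}\subsetneq\mathcal{F}'\subseteq 2^{[n]}$ contains one. *)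

theory Defs
  imports Main
begin

definition covers :: "('a \<times> 'a) set \<Rightarrow> 'a \<Rightarrow> 'a \<Rightarrow> bool" where
  "covers r x y \<longleftrightarrow> (x, y) \<in> r \<and> x \<noteq> y \<and>
     \<not> (\<exists>z. (x, z) \<in> r \<and> (z, y) \<in> r \<and> z \<noteq> x \<and> z \<noteq> y)"

definition UCTP :: "'a set \<Rightarrow> ('a \<times> 'a) set \<Rightarrow> bool" where
  "UCTP P r \<longleftrightarrow> (\<forall>S\<in>P. \<forall>T\<in>P.
     (covers r S T \<and> (\<forall>T'\<in>P. covers r S T' \<longrightarrow> T' = T))
       \<longrightarrow> (\<exists>S'\<in>P. S' \<noteq> S \<and> covers r S' T))"

definition contains_induced :: "'a set \<Rightarrow> ('a \<times> 'a) set \<Rightarrow> 'b set set \<Rightarrow> bool" where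
  "contains_induced P r \<F> \<longleftrightarrow> (\<exists>f. inj_on f P \<and> f ` P \<subseteq> \<F> \<and>
     (\<forall>u\<in>P. \<forall>v\<in>P. (u, v) \<in> r \<longleftrightarrow> f u \<subseteq> f v))"

definition induced_saturated :: "nat \<Rightarrow> 'a set \<Rightarrow> ('a \<times> 'a) set \<Rightarrow> nat set set \<Rightarrow> bool" where
  "induced_saturated n P r \<F> \<longleftrightarrow> \<F> \<subseteq> Pow {1..n} \<and> \<not> contains_induced P r \<F> \<and>
     (\<forall>\<F>'. \<F> \<subset> \<F>' \<and> \<F>' \<subseteq> Pow {1..n} \<longrightarrow> contains_induced P r \<F>')"

end

theory Submission
  imports Defs
begin

theorem lemma3p7:
  fixes P :: "'a set" and r :: "('a \<times> 'a) set" and n :: nat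
    and \<F> :: "nat set set" and x y :: nat
  assumes "partial_order_on P r"
    and "\<exists>a\<in>P. \<exists>b\<in>P. a \<noteq> b"
    and "UCTP P r"
    and "n \<ge> 3"
    and "induced_saturated n P r \<F>"
    and "x \<in> {1..n}" and "y \<in> {1..n}" and "x \<noteq> y"
    and "\<forall>F\<in>\<F>. card (F \<inter> {x, y}) \<noteq> 1"
  shows "\<forall>F\<in>\<F>. F \<inter> {x, y} = {}"
proof (rule ccontr)
  assume "\<not> ?thesis"
  then obtain F0 where F0: "F0 \<in> \<F>" "F0 \<inter> {x,y} \<noteq> {}" by blast
  have sub: "\<F> \<subseteq> Pow {1..n}" and nc: "\<not> contains_induced P r \<F>"
    and sat: "\<And>\<F>'. \<F> \<subset> \<F>' \<Longrightarrow> \<F>' \<subseteq> Pow {1..n} \<Longrightarrow> contains_induced P r \<F>'"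
    using assms(5) unfolding induced_saturated_def by blast+
  have fin: "\<And>G. G \<in> \<F> \<Longrightarrow> finite G" using sub finite_subset by blast
  have xy: "\<And>G. G \<in> \<F> \<Longrightarrow> x \<in> G \<longleftrightarrow> y \<in> G"
  proof -
    fix G assume G: "G \<in> \<F>"
    show "x \<in> G \<longleftrightarrow> y \<in> G"
    proof (rule ccontr)
      assume "\<not> (x \<in> G \<longleftrightarrow> y \<in> G)"
      then have "G \<inter> {x,y} = {x} \<or> G \<inter> {x,y} = {y}" using assms(8) by blast
      then have "card (G \<inter> {x,y}) = 1" by auto
      with G assms(9) show False by blast
    qed
  qed
  have "x \<in> F0" using F0 xy by blast
  then obtain F where F: "F \<in> \<F> \<and> x \<in> F" and Fmin: "\<And>G. G \<in> \<F> \<and> x \<in> G \<Longrightarrow> card F \<le> card G"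
    using ex_has_least_nat[of "\<lambda>G. G \<in> \<F> \<and> x \<in> G" F0 card] F0 by blast
  have FF: "F \<in> \<F>" "x \<in> F" "y \<in> F" using F xy by auto
  have below: "\<And>G. G \<in> \<F> \<Longrightarrow> G \<subseteq> F \<Longrightarrow> G \<noteq> F \<Longrightarrow> x \<notin> G \<and> y \<notin> G"
  proof -
    fix G assume G: "G \<in> \<F>" "G \<subseteq> F" "G \<noteq> F"
    have "card G < card F" using G fin FF(1) psubset_card_mono by blast
    then have "x \<notin> G" using Fmin G(1) by fastforce
    then show "x \<notin> G \<and> y \<notin> G" using xy G(1) by blast
  qed
  define A where "A = F - {y}"
  have AF: "A \<subseteq> F" "A \<noteq> F" using FF unfolding A_def by auto
  have "(A \<inter> {x,y}) = {x}" using FF assms(8) unfolding A_def by auto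
  then have "card (A \<inter> {x,y}) = 1" by simp
  then have AnF: "A \<notin> \<F>" using assms(9) by blast
  have AinPow: "A \<in> Pow {1..n}" using sub FF unfolding A_def by auto
  have up: "\<And>G. G \<in> \<F> \<Longrightarrow> A \<subseteq> G \<longleftrightarrow> F \<subseteq> G"
  proof -
    fix G assume G: "G \<in> \<F>"
    show "A \<subseteq> G \<longleftrightarrow> F \<subseteq> G"
    proof
      assume "A \<subseteq> G"
      then have "x \<in> G" using FF assms(8) unfolding A_def by auto
      then have "y \<in> G" using xy G by blast
      then show "F \<subseteq> G" using \<open>A \<subseteq> G\<close> unfolding A_def by auto
    qed (use AF in auto)
  qed
  have down: "\<And>G. G \<in> \<F> \<Longrightarrow> G \<subseteq> F \<Longrightarrow> G \<noteq> F \<Longrightarrow> G \<subseteq> A"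
    using below unfolding A_def by auto
  have "contains_induced P r (insert A \<F>)"
    using sat[of "insert A \<F>"] AnF AinPow sub by blast
  then obtain f where f3: "inj_on f P \<and> f ` P \<subseteq> insert A \<F> \<and>
     (\<forall>u\<in>P. \<forall>v\<in>P. (u, v) \<in> r \<longleftrightarrow> f u \<subseteq> f v)"
    unfolding contains_induced_def by (elim exE) (rule that)
  have finj: "inj_on f P" and fim: "f ` P \<subseteq> insert A \<F>" using f3 by simp_all
  have fr: "\<And>u v. u \<in> P \<Longrightarrow> v \<in> P \<Longrightarrow> (u, v) \<in> r \<longleftrightarrow> f u \<subseteq> f v"
    using f3 by simp
  have "A \<in> f ` P"
  proof (rule ccontr)
    assume "A \<notin> f ` P"
    then have "f ` P \<subseteq> \<F>" using fim by blast
    then have "contains_induced P r \<F>" using finj f3 unfolding contains_induced_def by (intro exI[of _ f]) simp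
    then show False using nc by simp
  qed
  then obtain u where u: "u \<in> P" "f u = A" by blast
  have oth: "\<And>v. v \<in> P \<Longrightarrow> v \<noteq> u \<Longrightarrow> f v \<in> \<F>"
  proof -
    fix v assume v: "v \<in> P" "v \<noteq> u"
    have "f v \<noteq> f u" using inj_onD[OF finj _ v(1) u(1)] v(2) by blast
    moreover have "f v \<in> insert A \<F>" using fim v(1) by blast
    ultimately show "f v \<in> \<F>" using u(2) by simp
  qed
  have "F \<in> f ` P"
  proof (rule ccontr)
    assume nF: "F \<notin> f ` P"
    define g where "g = f(u := F)"
    have "inj_on g P" using finj nF unfolding inj_on_def g_def by auto
    moreover have "g ` P \<subseteq> \<F>" using oth FF unfolding g_def by auto
    moreover have "\<forall>v\<in>P. \<forall>w\<in>P. (v, w) \<in> r \<longleftrightarrow> g v \<subseteq> g w"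
    proof (intro ballI)
      fix v w assume vw: "v \<in> P" "w \<in> P"
      show "(v, w) \<in> r \<longleftrightarrow> g v \<subseteq> g w"
      proof (cases "v = u")
        case True
        show ?thesis
        proof (cases "w = u")
          case True thus ?thesis using \<open>v = u\<close> fr u by (simp add: g_def)
        next
          case False
          then have "f w \<in> \<F>" using oth vw by blast
          then show ?thesis using fr[OF u(1) vw(2)] u up \<open>v = u\<close> False by (simp add: g_def)
        qed
      next
        case False
        note vu = False
        show ?thesis
        proof (cases "w = u")
          case True
          have fv: "f v \<in> \<F>" using oth vw vu by blast
          have fvF: "f v \<noteq> F" using nF vw by blast
          have "f v \<subseteq> A \<longleftrightarrow> f v \<subseteq> F" using down[OF fv] fvF AF by blast
          then show ?thesis using fr[OF vw(1) u(1)] u True vu by (simp add: g_def)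
        next
          case False
          then show ?thesis using fr[OF vw] vu by (simp add: g_def)
        qed
      qed
    qed
    ultimately have "contains_induced P r \<F>" unfolding contains_induced_def by blast
    with nc show False by blast
  qed
  then obtain t where t: "t \<in> P" "f t = F" by blast
  have tu: "t \<noteq> u" using t u AF by auto
  have ut: "(u, t) \<in> r" using fr[OF u(1) t(1)] u t AF by simp
  have cov: "covers r u t"
    unfolding covers_def
  proof (intro conjI ut tu[symmetric] notI)
    assume "\<exists>z. (u, z) \<in> r \<and> (z, t) \<in> r \<and> z \<noteq> u \<and> z \<noteq> t"
    then obtain z where z: "(u, z) \<in> r" "(z, t) \<in> r" "z \<noteq> u" "z \<noteq> t" by blast
    have zP: "z \<in> P" using z(1) assms(1) unfolding partial_order_on_def preorder_on_def refl_on_def by blast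
    have "f z \<in> \<F>" using oth zP z by blast
    moreover have "A \<subseteq> f z" using fr[OF u(1) zP] z u by simp
    ultimately have "F \<subseteq> f z" using up by blast
    moreover have "f z \<subseteq> F" using fr[OF zP t(1)] z t by simp
    ultimately have "f z = f t" using t by simp
    then show False using finj zP t z unfolding inj_on_def by blast
  qed
  have uniq: "\<forall>T'\<in>P. covers r u T' \<longrightarrow> T' = t"
  proof (intro ballI impI)
    fix T' assume T': "T' \<in> P" "covers r u T'"
    show "T' = t"
    proof (rule ccontr)
      assume ne: "T' \<noteq> t"
      have uT: "(u, T') \<in> r" "T' \<noteq> u" using T' unfolding covers_def by auto
      have "f T' \<in> \<F>" using oth T' uT by blast
      moreover have "A \<subseteq> f T'" using fr[OF u(1) T'(1)] uT u by simp
      ultimately have "F \<subseteq> f T'" using up by blast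
      then have "(t, T') \<in> r" using fr[OF t(1) T'(1)] t by simp
      then show False using T'(2) ut tu ne unfolding covers_def by blast
    qed
  qed
  obtain S' where S': "S' \<in> P" "S' \<noteq> u" "covers r S' t"
    using assms(3) u(1) t(1) cov uniq unfolding UCTP_def by blast
  have S't: "(S', t) \<in> r" "S' \<noteq> t" using S'(3) unfolding covers_def by auto
  have fS: "f S' \<in> \<F>" using oth S' by blast
  have "f S' \<subseteq> F" using fr[OF S'(1) t(1)] S't t by simp
  moreover have "f S' \<noteq> F" using finj S' t S't unfolding inj_on_def by blast
  ultimately have "f S' \<subseteq> A" using down fS by blast
  then have "(S', u) \<in> r" using fr[OF S'(1) u(1)] u by simp
  then show False using S'(3) ut S'(2) tu unfolding covers_def by blast
qed

end
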